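(* Let $L>0$, $N\in\mathbb{N}_+$, $h=L/N$, $\epsilon>0$, $\theta_0>0$, $\tau>0$, $\alpha\in(0,1)$, $\rho_u>0$, $\rho_w>0$, and let $u^n\in\mathcal{C}_{per}$ with $-1<u^n<1$ pointwise. Let $u^{n+1}\in\mathcal{C}_{per}$ (with $-1<u^{n+1}<1$ pointwise) be the solution of the first-order convex splitting scheme, i.e. together with some $w^{n+1}\in\mathcal{C}_{per}$, $$u^{n+1}-u^n=\tau\Delta_hw^{n+1},\qquad w^{n+1}=\log(1+u^{n+1})-\log(1-u^{n+1})-\theta_0u^n-\epsilon^2\Delta_hu^{n+1}.$$ Let $\{u_2^{(k)}\}$ be the sequence generated by Algorithm 1 (described in the context). Then $\lim_{k\to\infty}\|u_2^{(k)}-u^{n+1}\|_2=0$.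
   Context: $\mathcal{C}_{per}$ is the space of real grid functions $\nu=(\nu_{i,j,k})_{i,j,k\in\mathbb{Z}}$ that are $N$-periodic in each index (values at cell centres of a uniform grid of mesh size $h$ on $(0,L)^3$). Inner product $\langle\nu,\xi\rangle=h^2\sum_{i,j,k=1}^N\nu_{i,j,k}\xi_{i,j,k}$, $\|\nu\|_2=\langle\nu,\nu\rangle^{1/2}$. Discrete Laplacian $(\Delta_h\nu)_{i,j,k}=h^{-2}(\nu_{i+1,j,k}+\nu_{i-1,j,k}+\nu_{i,j+1,k}+\nu_{i,j-1,k}+\nu_{i,j,k+1}+\nu_{i,j,k-1}-6\nu_{i,j,k})$. Operations and inequalities are pointwise. Such a solution $(u^{n+1},w^{n+1})$ of the scheme exists and is unique for $-1<u^n<1$. Algorithm 1: set $u_2^{(0)}=u^n$, $w_2^{(0)}=0$, $u_3^{(0)}=0$, $w_3^{(0)}=0$. For $k=0,1,2,\dots$: (i) find $u_1^{(k+1)},w_1^{(k+1)}\in\mathcal{C}_{per}$ solving $-\epsilon^2\Delta_hu_1^{(k+1)}-\alpha w_1^{(k+1)}+u_3^{(k)}+\rho_u(u_1^{(k+1)}-u_2^{(k)})=0$ and $\alpha(-u_1^{(k+1)}+u^n)+\tau\Delta_hw_1^{(k+1)}-w_3^{(k)}-\rho_w(w_1^{(k+1)}-w_2^{(k)})=0$; (ii) find $u_2^{(k+1)},w_2^{(k+1)}\in\mathcal{C}_{per}$ with $-1<u_2^{(k+1)}<1$ solving $\log(1+u_2^{(k+1)})-\log(1-u_2^{(k+1)})-\theta_0u^n-(1-\alpha)w_2^{(k+1)}-u_3^{(k)}-\rho_u(u_1^{(k+1)}-u_2^{(k+1)})=0$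 and $(1-\alpha)(-u_2^{(k+1)}+u^n)+w_3^{(k)}+\rho_w(w_1^{(k+1)}-w_2^{(k+1)})=0$; (iii) set $u_3^{(k+1)}=u_3^{(k)}+\rho_u(u_1^{(k+1)}-u_2^{(k+1)})$, $w_3^{(k+1)}=w_3^{(k)}+\rho_w(w_1^{(k+1)}-w_2^{(k+1)})$. *)

theory Defs
  imports Complex_Main
begin

type_synonym grid = "int \<Rightarrow> int \<Rightarrow> int \<Rightarrow> real"

definition per :: "nat \<Rightarrow> grid \<Rightarrow> bool" where
  "per N v \<longleftrightarrow> (\<forall>i j k. v (i + int N) j k = v i j k \<and> v i (j + int N) k = v i j k
                         \<and> v i j (k + int N) = v i j k)"

definition lap :: "real \<Rightarrow> grid \<Rightarrow> grid" where
  "lap h v = (\<lambda>i j k. (v (i+1) j k + v (i-1) j k + v i (j+1) k + v i (j-1) k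
                       + v i j (k+1) + v i j (k-1) - 6 * v i j k) / h\<^sup>2)"

text \<open>Discrete inner product and norm, as in the paper (weight h^2).\<close>
definition ginner :: "real \<Rightarrow> nat \<Rightarrow> grid \<Rightarrow> grid \<Rightarrow> real" where
  "ginner h N v x = h\<^sup>2 * (\<Sum>i\<in>{1..int N}. \<Sum>j\<in>{1..int N}. \<Sum>k\<in>{1..int N}. v i j k * x i j k)"

definition gnorm2 :: "real \<Rightarrow> nat \<Rightarrow> grid \<Rightarrow> real" where
  "gnorm2 h N v = sqrt (ginner h N v v)"

end

theory Submission
  imports Defs
begin


definition S :: "nat \<Rightarrow> grid \<Rightarrow> real" where
  "S N g = (\<Sum>i\<in>{1..int N}. \<Sum>j\<in>{1..int N}. \<Sum>k\<in>{1..int N}. g i j k)"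

lemma S_add: "S N (\<lambda>i j k. f i j k + g i j k) = S N f + S N g"
  unfolding S_def by (simp add: sum.distrib)
lemma S_diff: "S N (\<lambda>i j k. f i j k - g i j k) = S N f - S N g"
  unfolding S_def by (simp add: sum_subtractf)
lemma S_cmult: "S N (\<lambda>i j k. c * f i j k) = c * S N f"
  unfolding S_def by (simp add: sum_distrib_left)
lemma S_neg: "S N (\<lambda>i j k. - f i j k) = - S N f"
  unfolding S_def by (simp add: sum_negf)
lemma S_div: "S N (\<lambda>i j k. f i j k / c) = S N f / c"
  unfolding S_def by (simp add: sum_divide_distrib)
lemma S_mono: "(\<And>i j k. f i j k \<le> g i j k) \<Longrightarrow> S N f \<le> S N g"
  unfolding S_def by (intro sum_mono) auto
lemma S_nonneg: "(\<And>i j k. 0 \<le> f i j k) \<Longrightarrow> 0 \<le> S N f"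
  unfolding S_def by (intro sum_nonneg) auto

lemma sum_shift:
  assumes "\<forall>i. f (i + int N) = (f i :: real)"
  shows "(\<Sum>i\<in>{1..int N}. f (i+1)) = (\<Sum>i\<in>{1..int N}. f i)"
proof (cases "N = 0")
  case True then show ?thesis by simp
next
  case False
  have "(\<Sum>i\<in>{1..int N}. f (i+1)) = (\<Sum>i\<in>{2..int N + 1}. f i)"
  proof -
    have "(\<Sum>i\<in>{1..int N}. f (i+1)) = sum f ((\<lambda>i. i+1) ` {1..int N})"
      by (subst sum.reindex) (auto simp: inj_on_def)
    also have "(\<lambda>i. i+1) ` {1..int N} = {2..int N + 1}"
      by (auto simp: image_iff intro!: bexI[where x="_ - 1"])
    finally show ?thesis .
  qed
  moreover have "sum f {1..int N + 1} = f 1 + sum f {2..int N + 1}"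
  proof -
    have "{1..int N + 1} = insert 1 {2..int N + 1}" by auto
    then show ?thesis by simp
  qed
  moreover have "sum f {1..int N + 1} = f (int N + 1) + sum f {1..int N}"
  proof -
    have "{1..int N + 1} = insert (int N + 1) {1..int N}" by auto
    then show ?thesis by simp
  qed
  moreover have "f (int N + 1) = f 1" using assms[rule_format, of 1] by (simp add: add.commute)
  ultimately show ?thesis by linarith
qed

lemma shiftI: assumes "\<forall>i j k. g (i + int N) j k = g i j k"
  shows "S N (\<lambda>i j k. g (i+1) j k) = S N g"
  unfolding S_def
  by (rule sum_shift[where f="\<lambda>i. \<Sum>j\<in>{1..int N}. \<Sum>k\<in>{1..int N}. g i j k"]) (simp add: assms)

lemma shiftJ: assumes "\<forall>i j k. g i (j + int N) k = g i j k"
  shows "S N (\<lambda>i j k. g i (j+1) k) = S N g"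
  unfolding S_def
  by (intro sum.cong refl sum_shift[where f="\<lambda>j. \<Sum>k\<in>{1..int N}. g _ j k"]) (simp add: assms)

lemma shiftK: assumes "\<forall>i j k. g i j (k + int N) = g i j k"
  shows "S N (\<lambda>i j k. g i j (k+1)) = S N g"
  unfolding S_def
  by (intro sum.cong refl sum_shift[where f="\<lambda>k. g _ _ k"]) (simp add: assms)

lemma dir_neg:
  assumes "S N (\<lambda>i j k. A i j k * A i j k) = S N (\<lambda>i j k. v i j k * v i j k)"
    and "S N (\<lambda>i j k. B i j k * v i j k) = S N (\<lambda>i j k. v i j k * A i j k)"
  shows "S N (\<lambda>i j k. A i j k * v i j k + B i j k * v i j k - 2 * (v i j k * v i j k)) \<le> 0"
proof -
  have "0 \<le> S N (\<lambda>i j k. (A i j k - v i j k) * (A i j k - v i j k))"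
    by (rule S_nonneg) simp
  also have "(\<lambda>i j k. (A i j k - v i j k) * (A i j k - v i j k)) =
     (\<lambda>i j k. A i j k * A i j k - 2 * (v i j k * A i j k) + v i j k * v i j k)"
    by (auto simp: algebra_simps)
  finally have h: "0 \<le> S N (\<lambda>i j k. A i j k * A i j k) - 2 * S N (\<lambda>i j k. v i j k * A i j k) + S N (\<lambda>i j k. v i j k * v i j k)"
    by (simp add: S_add S_diff S_cmult)
  have "S N (\<lambda>i j k. A i j k * v i j k + B i j k * v i j k - 2 * (v i j k * v i j k))
     = S N (\<lambda>i j k. v i j k * A i j k) + S N (\<lambda>i j k. B i j k * v i j k) - 2 * S N (\<lambda>i j k. v i j k * v i j k)"
    by (simp add: S_add S_diff S_cmult mult.commute)
  then show ?thesis using h assms by linarith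
qed

lemma lap_neg:
  assumes "per N v"
  shows "S N (\<lambda>i j k. lap h v i j k * v i j k) \<le> 0"
proof -
  have pI: "\<forall>i j k. v (i + int N) j k = v i j k" and pJ: "\<forall>i j k. v i (j + int N) k = v i j k"
    and pK: "\<forall>i j k. v i j (k + int N) = v i j k" using assms unfolding per_def by auto
  have pI': "\<forall>i j k. v (i + int N - 1) j k = v (i - 1) j k" by (metis pI diff_add_eq)
  have pJ': "\<forall>i j k. v i (j + int N - 1) k = v i (j - 1) k" by (metis pJ diff_add_eq)
  have pK': "\<forall>i j k. v i j (k + int N - 1) = v i j (k - 1)" by (metis pK diff_add_eq)
  have dI: "S N (\<lambda>i j k. v (i+1) j k * v i j k + v (i-1) j k * v i j k - 2 * (v i j k * v i j k)) \<le> 0"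
  proof (rule dir_neg)
    show "S N (\<lambda>i j k. v (i+1) j k * v (i+1) j k) = S N (\<lambda>i j k. v i j k * v i j k)"
      by (rule shiftI[where g="\<lambda>i j k. v i j k * v i j k"]) (simp add: pI)
    have "S N (\<lambda>i j k. v (i+1-1) j k * v (i+1) j k) = S N (\<lambda>i j k. v (i-1) j k * v i j k)"
      by (rule shiftI[where g="\<lambda>i j k. v (i-1) j k * v i j k"])
        (use pI in \<open>simp add: pI'\<close>)
    then show "S N (\<lambda>i j k. v (i-1) j k * v i j k) = S N (\<lambda>i j k. v i j k * v (i+1) j k)" by simp
  qed
  have dJ: "S N (\<lambda>i j k. v i (j+1) k * v i j k + v i (j-1) k * v i j k - 2 * (v i j k * v i j k)) \<le> 0"
  proof (rule dir_neg)
    show "S N (\<lambda>i j k. v i (j+1) k * v i (j+1) k) = S N (\<lambda>i j k. v i j k * v i j k)"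
      by (rule shiftJ[where g="\<lambda>i j k. v i j k * v i j k"]) (simp add: pJ)
    have "S N (\<lambda>i j k. v i (j+1-1) k * v i (j+1) k) = S N (\<lambda>i j k. v i (j-1) k * v i j k)"
      by (rule shiftJ[where g="\<lambda>i j k. v i (j-1) k * v i j k"])
        (use pJ in \<open>simp add: pJ'\<close>)
    then show "S N (\<lambda>i j k. v i (j-1) k * v i j k) = S N (\<lambda>i j k. v i j k * v i (j+1) k)" by simp
  qed
  have dK: "S N (\<lambda>i j k. v i j (k+1) * v i j k + v i j (k-1) * v i j k - 2 * (v i j k * v i j k)) \<le> 0"
  proof (rule dir_neg)
    show "S N (\<lambda>i j k. v i j (k+1) * v i j (k+1)) = S N (\<lambda>i j k. v i j k * v i j k)"
      by (rule shiftK[where g="\<lambda>i j k. v i j k * v i j k"]) (simp add: pK)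
    have "S N (\<lambda>i j k. v i j (k+1-1) * v i j (k+1)) = S N (\<lambda>i j k. v i j (k-1) * v i j k)"
      by (rule shiftK[where g="\<lambda>i j k. v i j (k-1) * v i j k"])
        (use pK in \<open>simp add: pK'\<close>)
    then show "S N (\<lambda>i j k. v i j (k-1) * v i j k) = S N (\<lambda>i j k. v i j k * v i j (k+1))" by simp
  qed
  have "(\<lambda>i j k. lap h v i j k * v i j k) = (\<lambda>i j k.
      ((v (i+1) j k * v i j k + v (i-1) j k * v i j k - 2 * (v i j k * v i j k))
     + (v i (j+1) k * v i j k + v i (j-1) k * v i j k - 2 * (v i j k * v i j k))
     + (v i j (k+1) * v i j k + v i j (k-1) * v i j k - 2 * (v i j k * v i j k))) / h\<^sup>2)"
    unfolding lap_def by (intro ext) (simp add: field_simps)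
  then have "S N (\<lambda>i j k. lap h v i j k * v i j k) = (S N (\<lambda>i j k. v (i+1) j k * v i j k + v (i-1) j k * v i j k - 2 * (v i j k * v i j k))
     + S N (\<lambda>i j k. v i (j+1) k * v i j k + v i (j-1) k * v i j k - 2 * (v i j k * v i j k))
     + S N (\<lambda>i j k. v i j (k+1) * v i j k + v i j (k-1) * v i j k - 2 * (v i j k * v i j k))) / h\<^sup>2"
    by (simp only: S_div S_add)
  also have "\<dots> \<le> 0" using dI dJ dK by (intro divide_nonpos_nonneg) auto
  finally show ?thesis .
qed

definition Fp :: "real \<Rightarrow> real" where "Fp x = ln (1 + x) - ln (1 - x)"

lemma aux: "(a::real) - b = c \<Longrightarrow> 0 \<le> c \<Longrightarrow> b \<le> a" by linarith

lemma aux2: "(x::real) \<ge> y \<Longrightarrow> 0 \<le> p \<Longrightarrow> 0 \<le> q \<Longrightarrow> 0 \<le> p + q + 2 * (x - y)" by simp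

lemma ln_diff_ge: "0 < (a::real) \<Longrightarrow> 0 < b \<Longrightarrow> ln a - ln b \<ge> (a - b) / a"
proof -
  assume a: "0 < a" "0 < b"
  have "ln (b / a) \<le> b / a - 1" using ln_le_minus_one[of "b/a"] a by simp
  moreover have "ln (b / a) = ln b - ln a" using a by (simp add: ln_div)
  moreover have "b / a - 1 = - ((a - b) / a)" using a by (simp add: field_simps)
  ultimately show ?thesis by linarith
qed

lemma Fp_ge: assumes "-1 < y" "y \<le> x" "x < 1" shows "Fp x - Fp y \<ge> x - y"
proof -
  have 1: "ln (1+x) - ln (1+y) \<ge> (x - y) / (1 + x)" using ln_diff_ge[of "1+x" "1+y"] assms by simp
  have 2: "ln (1-y) - ln (1-x) \<ge> (x - y) / (1 - y)" using ln_diff_ge[of "1-y" "1-x"] assms by simp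
  have 3: "(x - y) / (1 + x) \<ge> (x - y) / 2" using assms by (intro divide_left_mono) auto
  have 4: "(x - y) / (1 - y) \<ge> (x - y) / 2" using assms by (intro divide_left_mono) auto
  have 5: "(x-y)/2 + (x-y)/2 = x - y" by simp
  show ?thesis using 1 2 3 4 5 unfolding Fp_def by linarith
qed

lemma Fp_mono: assumes "-1 < x" "x < 1" "-1 < y" "y < 1"
  shows "(Fp x - Fp y) * (x - y) \<ge> (x - y)\<^sup>2"
proof (cases "y \<le> x")
  case True
  then have "Fp x - Fp y \<ge> x - y" using Fp_ge assms by auto
  then show ?thesis using True by (simp add: power2_eq_square mult_right_mono)
next
  case False
  then have "Fp y - Fp x \<ge> y - x" using Fp_ge assms by auto
  then have "(Fp y - Fp x) * (y - x) \<ge> (y - x) * (y - x)" using False by (intro mult_right_mono) auto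
  then show ?thesis by (simp add: power2_eq_square algebra_simps)
qed



lemma pt_id:
  fixes ru rw eps tau al th un us ws Fs Fm F2 u1 u2 u2m w1 w2 w2m u3 u3m w3 w3m Lu1 Lw1 Lus Lws :: real
  assumes ru: "ru > 0" and rw: "rw > 0"
  and H1: "- eps\<^sup>2 * Lu1 - al * w1 + u3m + ru * (u1 - u2m) = 0"
  and H2: "al * (- u1 + un) + tau * Lw1 - w3m - rw * (w1 - w2m) = 0"
  and H3: "F2 - th * un - (1 - al) * w2 - u3m - ru * (u1 - u2) = 0"
  and H4: "(1 - al) * (- u2 + un) + w3m + rw * (w1 - w2) = 0"
  and H5: "u3 = u3m + ru * (u1 - u2)" and H6: "w3 = w3m + rw * (w1 - w2)"
  and H7: "Fm - th * un - (1 - al) * w2m - u3m = 0"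
  and H8: "(1 - al) * (- u2m + un) + w3m = 0"
  and H9: "us - un = tau * Lws"
  and H10: "ws = Fs - th * un - eps\<^sup>2 * Lus"
  shows "((u3m - (Fs - th * un - (1 - al) * ws))\<^sup>2 / ru + (w3m - (1 - al) * (us - un))\<^sup>2 / rw + ru * (u2m - us)\<^sup>2 + rw * (w2m - ws)\<^sup>2)
       - ((u3 - (Fs - th * un - (1 - al) * ws))\<^sup>2 / ru + (w3 - (1 - al) * (us - un))\<^sup>2 / rw + ru * (u2 - us)\<^sup>2 + rw * (w2 - ws)\<^sup>2)
       - 2 * (u2 - us)\<^sup>2
       - 2 * (eps\<^sup>2 * (- ((Lu1 - Lus) * (u1 - us))) + tau * (- ((Lw1 - Lws) * (w1 - ws))))
     = ru * (u1 - u2m)\<^sup>2 + rw * (w1 - w2m)\<^sup>2 + 2 * ((F2 - Fs) * (u2 - us) - (u2 - us)\<^sup>2)"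
proof -
  have e1: "eps\<^sup>2 * Lu1 = - al * w1 + u3m + ru * (u1 - u2m)" using H1 by linarith
  have e2: "tau * Lw1 = - al * (- u1 + un) + w3m + rw * (w1 - w2m)" using H2 by linarith
  have e9: "tau * Lws = us - un" using H9 by linarith
  have e10: "eps\<^sup>2 * Lus = Fs - th * un - ws" using H10 by linarith
  have e7: "u3m = Fm - th * un - (1 - al) * w2m" using H7 by linarith
  have e8: "w3m = (1 - al) * (u2m - un)" using H8 by (simp add: algebra_simps)
  have e3: "F2 = th * un + (1 - al) * w2 + u3m + ru * (u1 - u2)" using H3 by linarith
  have e4: "w1 = w2 + ((1 - al) * (u2 - un) - w3m) / rw" using H4 rw by (simp add: field_simps)
  have "eps\<^sup>2 * (- ((Lu1 - Lus) * (u1 - us))) + tau * (- ((Lw1 - Lws) * (w1 - ws)))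
     = (eps\<^sup>2 * Lus - eps\<^sup>2 * Lu1) * (u1 - us) + (tau * Lws - tau * Lw1) * (w1 - ws)"
    by (simp add: algebra_simps)
  also have "\<dots> = ((Fs - th * un - ws) - (- al * w1 + u3m + ru * (u1 - u2m))) * (u1 - us)
      + ((us - un) - (- al * (- u1 + un) + w3m + rw * (w1 - w2m))) * (w1 - ws)"
    by (simp only: e1 e2 e9 e10)
  finally have L: "eps\<^sup>2 * (- ((Lu1 - Lus) * (u1 - us))) + tau * (- ((Lw1 - Lws) * (w1 - ws))) = \<dots>" .
  show ?thesis unfolding L H5 H6 e3 
    unfolding e4 unfolding e8 e7 using ru rw
    by (simp add: field_simps power2_eq_square)
qed



theorem theorem4p4:
  fixes L eps theta0 tau alpha rho_u rho_w h :: real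
    and N :: nat
    and un unp1 wnp1 :: grid
    and u1 w1 u2 w2 u3 w3 :: "nat \<Rightarrow> grid"
  assumes "L > 0" and "N > 0" and "h = L / real N"
    and "eps > 0" and "theta0 > 0" and "tau > 0"
    and "0 < alpha" and "alpha < 1" and "rho_u > 0" and "rho_w > 0"
    and "per N un" and "\<forall>i j k. -1 < un i j k \<and> un i j k < 1"
    (* the convex splitting scheme solution *)
    and "per N unp1" and "per N wnp1"
    and "\<forall>i j k. -1 < unp1 i j k \<and> unp1 i j k < 1"
    and "\<forall>i j k. unp1 i j k - un i j k = tau * lap h wnp1 i j k"
    and "\<forall>i j k. wnp1 i j k = ln (1 + unp1 i j k) - ln (1 - unp1 i j k)
                 - theta0 * un i j k - eps\<^sup>2 * lap h unp1 i j k"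
    (* Algorithm 1: initialisation *)
    and "u2 0 = un" and "w2 0 = (\<lambda>i j k. 0)"
    and "u3 0 = (\<lambda>i j k. 0)" and "w3 0 = (\<lambda>i j k. 0)"
    (* Algorithm 1, step (i) *)
    and "\<forall>m. per N (u1 (Suc m)) \<and> per N (w1 (Suc m))"
    and "\<forall>m i j k. - eps\<^sup>2 * lap h (u1 (Suc m)) i j k - alpha * w1 (Suc m) i j k
                 + u3 m i j k + rho_u * (u1 (Suc m) i j k - u2 m i j k) = 0"
    and "\<forall>m i j k. alpha * (- u1 (Suc m) i j k + un i j k) + tau * lap h (w1 (Suc m)) i j k
                 - w3 m i j k - rho_w * (w1 (Suc m) i j k - w2 m i j k) = 0"
    (* Algorithm 1, step (ii) *)
    and "\<forall>m. per N (u2 (Suc m)) \<and> per N (w2 (Suc m))"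
    and "\<forall>m i j k. -1 < u2 (Suc m) i j k \<and> u2 (Suc m) i j k < 1"
    and "\<forall>m i j k. ln (1 + u2 (Suc m) i j k) - ln (1 - u2 (Suc m) i j k)
                 - theta0 * un i j k - (1 - alpha) * w2 (Suc m) i j k - u3 m i j k
                 - rho_u * (u1 (Suc m) i j k - u2 (Suc m) i j k) = 0"
    and "\<forall>m i j k. (1 - alpha) * (- u2 (Suc m) i j k + un i j k) + w3 m i j k
                 + rho_w * (w1 (Suc m) i j k - w2 (Suc m) i j k) = 0"
    (* Algorithm 1, step (iii) *)
    and "\<forall>m i j k. u3 (Suc m) i j k = u3 m i j k + rho_u * (u1 (Suc m) i j k - u2 (Suc m) i j k)"
    and "\<forall>m i j k. w3 (Suc m) i j k = w3 m i j k + rho_w * (w1 (Suc m) i j k - w2 (Suc m) i j k)"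
  shows "(\<lambda>m. gnorm2 h N (\<lambda>i j k. u2 m i j k - unp1 i j k)) \<longlonglongrightarrow> 0"
  
proof -
  note A = assms
  define us where "us = unp1"
  define ws where "ws = wnp1"
  define lu where "lu = (\<lambda>i j k. Fp (us i j k) - theta0 * un i j k - (1 - alpha) * ws i j k)"
  define lw where "lw = (\<lambda>i j k. (1 - alpha) * (us i j k - un i j k))"
  define T where "T = (\<lambda>m i j k. (u3 m i j k - lu i j k)\<^sup>2 / rho_u + (w3 m i j k - lw i j k)\<^sup>2 / rho_w
       + rho_u * (u2 m i j k - us i j k)\<^sup>2 + rho_w * (w2 m i j k - ws i j k)\<^sup>2)"
  define V where "V = (\<lambda>m. S N (T m))"
  define X where "X = (\<lambda>m. S N (\<lambda>i j k. (u2 m i j k - us i j k)\<^sup>2))"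
  have Vnn: "\<And>m. V m \<ge> 0" unfolding V_def T_def using A(9,10)
    by (intro S_nonneg) auto
  have Xnn: "\<And>m. X m \<ge> 0" unfolding X_def by (intro S_nonneg) auto
  have lapd: "\<And>f g i j k. lap h (\<lambda>i j k. f i j k - g i j k) i j k = lap h f i j k - lap h g i j k"
    unfolding lap_def diff_divide_distrib[symmetric] by (rule arg_cong[where f="\<lambda>x. x / _"]) (simp add: algebra_simps)
  have perd: "\<And>f g. per N f \<Longrightarrow> per N g \<Longrightarrow> per N (\<lambda>i j k. f i j k - g i j k)"
    unfolding per_def by auto
  have step: "V (Suc (Suc n)) + 2 * X (Suc (Suc n)) \<le> V (Suc n)" for n
  proof -
    define c where "c = (\<lambda>i j k. u1 (Suc (Suc n)) i j k - us i j k)"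
    define d where "d = (\<lambda>i j k. w1 (Suc (Suc n)) i j k - ws i j k)"
    have pc: "per N c" unfolding c_def us_def using A(22,13) by (intro perd) auto
    have pd: "per N d" unfolding d_def ws_def using A(22,14) by (intro perd) auto
    have pw: "2 * (eps\<^sup>2 * (- (lap h c i j k * c i j k)) + tau * (- (lap h d i j k * d i j k)))
        \<le> T (Suc n) i j k - T (Suc (Suc n)) i j k - 2 * (u2 (Suc (Suc n)) i j k - us i j k)\<^sup>2" for i j k
    proof -
      let ?u2 = "u2 (Suc (Suc n)) i j k" and ?us = "us i j k"
      have q0: "rho_u > 0" "rho_w > 0" using A(9,10) by auto
      have q1: "- eps\<^sup>2 * lap h (u1 (Suc (Suc n))) i j k - alpha * w1 (Suc (Suc n)) i j k + u3 (Suc n) i j k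
            + rho_u * (u1 (Suc (Suc n)) i j k - u2 (Suc n) i j k) = 0" using A(23)[rule_format, of "Suc n" i j k] .
      have q2: "alpha * (- u1 (Suc (Suc n)) i j k + un i j k) + tau * lap h (w1 (Suc (Suc n))) i j k
            - w3 (Suc n) i j k - rho_w * (w1 (Suc (Suc n)) i j k - w2 (Suc n) i j k) = 0" using A(24)[rule_format, of "Suc n" i j k] .
      have q3: "Fp ?u2 - theta0 * un i j k - (1 - alpha) * w2 (Suc (Suc n)) i j k - u3 (Suc n) i j k
            - rho_u * (u1 (Suc (Suc n)) i j k - ?u2) = 0" using A(27)[rule_format, of "Suc n" i j k] unfolding Fp_def .
      have q4: "(1 - alpha) * (- ?u2 + un i j k) + w3 (Suc n) i j k + rho_w * (w1 (Suc (Suc n)) i j k - w2 (Suc (Suc n)) i j k) = 0"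
          using A(28)[rule_format, of "Suc n" i j k] .
      have q5: "u3 (Suc (Suc n)) i j k = u3 (Suc n) i j k + rho_u * (u1 (Suc (Suc n)) i j k - ?u2)" using A(29)[rule_format, of "Suc n" i j k] .
      have q6: "w3 (Suc (Suc n)) i j k = w3 (Suc n) i j k + rho_w * (w1 (Suc (Suc n)) i j k - w2 (Suc (Suc n)) i j k)" using A(30)[rule_format, of "Suc n" i j k] .
      have a27: "Fp (u2 (Suc n) i j k) - theta0 * un i j k - (1 - alpha) * w2 (Suc n) i j k - u3 n i j k
            - rho_u * (u1 (Suc n) i j k - u2 (Suc n) i j k) = 0" using A(27)[rule_format, of n i j k] unfolding Fp_def .
      have q7: "Fp (u2 (Suc n) i j k) - theta0 * un i j k - (1 - alpha) * w2 (Suc n) i j k - u3 (Suc n) i j k = 0"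
          using a27 A(29)[rule_format, of n i j k] by linarith
      have a28: "(1 - alpha) * (- u2 (Suc n) i j k + un i j k) + w3 n i j k + rho_w * (w1 (Suc n) i j k - w2 (Suc n) i j k) = 0"
          using A(28)[rule_format, of n i j k] .
      have q8: "(1 - alpha) * (- u2 (Suc n) i j k + un i j k) + w3 (Suc n) i j k = 0"
          using a28 A(30)[rule_format, of n i j k] by linarith
      have q9: "?us - un i j k = tau * lap h ws i j k" using A(16)[rule_format, of i j k] unfolding us_def ws_def .
      have q10: "ws i j k = Fp ?us - theta0 * un i j k - eps\<^sup>2 * lap h us i j k" using A(17)[rule_format, of i j k] unfolding us_def ws_def Fp_def .
      have eq: "T (Suc n) i j k - T (Suc (Suc n)) i j k - 2 * (?u2 - ?us)\<^sup>2
          - 2 * (eps\<^sup>2 * (- ((lap h (u1 (Suc (Suc n))) i j k - lap h us i j k) * (u1 (Suc (Suc n)) i j k - us i j k)))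
               + tau * (- ((lap h (w1 (Suc (Suc n))) i j k - lap h ws i j k) * (w1 (Suc (Suc n)) i j k - ws i j k))))
         = rho_u * (u1 (Suc (Suc n)) i j k - u2 (Suc n) i j k)\<^sup>2 + rho_w * (w1 (Suc (Suc n)) i j k - w2 (Suc n) i j k)\<^sup>2
           + 2 * ((Fp ?u2 - Fp ?us) * (?u2 - ?us) - (?u2 - ?us)\<^sup>2)"
        unfolding T_def lu_def lw_def by (rule pt_id[OF q0 q1 q2 q3 q4 q5 q6 q7 q8 q9 q10])
      have m1: "(Fp ?u2 - Fp ?us) * (?u2 - ?us) \<ge> (?u2 - ?us)\<^sup>2"
        using A(26,15) unfolding us_def by (intro Fp_mono) auto
      have m2: "0 \<le> rho_u * (u1 (Suc (Suc n)) i j k - u2 (Suc n) i j k)\<^sup>2" "0 \<le> rho_w * (w1 (Suc (Suc n)) i j k - w2 (Suc n) i j k)\<^sup>2"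
        using A(9,10) by auto
      have l1: "lap h c i j k * c i j k = (lap h (u1 (Suc (Suc n))) i j k - lap h us i j k) * (u1 (Suc (Suc n)) i j k - us i j k)"
        unfolding c_def lapd by (rule refl)
      have l2: "lap h d i j k * d i j k = (lap h (w1 (Suc (Suc n))) i j k - lap h ws i j k) * (w1 (Suc (Suc n)) i j k - ws i j k)"
        unfolding d_def lapd by (rule refl)
      have R: "0 \<le> rho_u * (u1 (Suc (Suc n)) i j k - u2 (Suc n) i j k)\<^sup>2 + rho_w * (w1 (Suc (Suc n)) i j k - w2 (Suc n) i j k)\<^sup>2
           + 2 * ((Fp ?u2 - Fp ?us) * (?u2 - ?us) - (?u2 - ?us)\<^sup>2)" by (rule aux2[OF m1 m2])
      show ?thesis unfolding l1 l2 by (rule aux[OF eq R])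
    qed
    have "S N (\<lambda>i j k. 2 * (eps\<^sup>2 * (- (lap h c i j k * c i j k)) + tau * (- (lap h d i j k * d i j k))))
        \<le> S N (\<lambda>i j k. T (Suc n) i j k - T (Suc (Suc n)) i j k - 2 * (u2 (Suc (Suc n)) i j k - us i j k)\<^sup>2)"
      by (rule S_mono) (rule pw)
    also have "\<dots> = V (Suc n) - V (Suc (Suc n)) - 2 * X (Suc (Suc n))"
      unfolding V_def X_def by (simp add: S_diff S_cmult)
    also have "S N (\<lambda>i j k. 2 * (eps\<^sup>2 * (- (lap h c i j k * c i j k)) + tau * (- (lap h d i j k * d i j k))))
        = 2 * (eps\<^sup>2 * (- S N (\<lambda>i j k. lap h c i j k * c i j k)) + tau * (- S N (\<lambda>i j k. lap h d i j k * d i j k)))"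
      by (simp only: S_add S_cmult S_neg)
    finally have "2 * (eps\<^sup>2 * (- S N (\<lambda>i j k. lap h c i j k * c i j k)) + tau * (- S N (\<lambda>i j k. lap h d i j k * d i j k)))
        \<le> V (Suc n) - V (Suc (Suc n)) - 2 * X (Suc (Suc n))" .
    moreover have "0 \<le> eps\<^sup>2 * (- S N (\<lambda>i j k. lap h c i j k * c i j k))"
      using lap_neg[OF pc, of h] by (simp add: mult_nonneg_nonpos)
    moreover have "0 \<le> tau * (- S N (\<lambda>i j k. lap h d i j k * d i j k))"
      using lap_neg[OF pd, of h] A(6) by (simp add: mult_nonneg_nonpos)
    ultimately have "0 \<le> V (Suc n) - V (Suc (Suc n)) - 2 * X (Suc (Suc n))"
      by (meson add_nonneg_nonneg order_trans zero_le_numeral mult_nonneg_nonneg)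
    then show ?thesis by linarith
  qed
  define W where "W = (\<lambda>n. V (Suc n))"
  have "decseq W" unfolding W_def using step Xnn
  proof (intro decseq_SucI)
    fix n show "V (Suc (Suc n)) \<le> V (Suc n)" using step[of n] Xnn[of "Suc (Suc n)"] by linarith
  qed
  then obtain Lim where WL: "W \<longlonglongrightarrow> Lim" using Vnn decseq_convergent[of W 0] unfolding W_def by blast
  then have "(\<lambda>n. (W n - W (Suc n)) / 2) \<longlonglongrightarrow> (Lim - Lim) / 2"
    by (intro tendsto_divide tendsto_diff tendsto_const LIMSEQ_Suc[OF WL] WL) simp
  then have D: "(\<lambda>n. (W n - W (Suc n)) / 2) \<longlonglongrightarrow> 0" by simp
  have "(\<lambda>n. X (n + 2)) \<longlonglongrightarrow> 0"
  proof (rule real_tendsto_sandwich[OF _ _ tendsto_const D])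
    show "\<forall>\<^sub>F n in sequentially. 0 \<le> X (n + 2)" using Xnn by auto
    show "\<forall>\<^sub>F n in sequentially. X (n + 2) \<le> (W n - W (Suc n)) / 2"
    proof (intro always_eventually allI)
      fix n
      have "n + 2 = Suc (Suc n)" by simp
      then show "X (n + 2) \<le> (W n - W (Suc n)) / 2" using step[of n] unfolding W_def by simp
    qed
  qed
  then have X0: "X \<longlonglongrightarrow> 0" by (rule LIMSEQ_offset)
  have "(\<lambda>m. sqrt (h\<^sup>2 * X m)) \<longlonglongrightarrow> sqrt (h\<^sup>2 * 0)"
    by (intro tendsto_intros X0)
  moreover have "gnorm2 h N (\<lambda>i j k. u2 m i j k - unp1 i j k) = sqrt (h\<^sup>2 * X m)" for m
    unfolding gnorm2_def ginner_def X_def S_def us_def by (simp only: power2_eq_square)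
  ultimately show ?thesis by simp
qed

end
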